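(* If $X$ is a prime permutation graph, then ${\rm Aut}(X)$ is isomorphic to a subgroup of $\mathbb{Z}_2^2$.
   Context: A permutation graph is a graph $X$ such that both $X$ and its complement $\overline X$ are comparability graphs (have transitive orientations). A module of $X$ is a set $M\subseteq V(X)$ such that every vertex outside $M$ is adjacent to all of $M$ or to none; $X$ is prime if its only modules are $V(X)$ and singletons. *)

theory Defs
  imports "HOL-Algebra.Algebra"
begin

definition graph :: "'a set \<Rightarrow> ('a \<Rightarrow> 'a \<Rightarrow> bool) \<Rightarrow> bool" where
  "graph V E \<longleftrightarrow> finite V \<and> (\<forall>u\<in>V. \<forall>v\<in>V. E u v \<longrightarrow> E v u) \<and> (\<forall>v\<in>V. \<not> E v v)"

definition compl_graph :: "'a set \<Rightarrow> ('a \<Rightarrow> 'a \<Rightarrow> bool) \<Rightarrow> ('a \<Rightarrow> 'a \<Rightarrow> bool)" where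
  "compl_graph V E = (\<lambda>u v. u \<noteq> v \<and> \<not> E u v)"

definition transitive_orientation ::
  "'a set \<Rightarrow> ('a \<Rightarrow> 'a \<Rightarrow> bool) \<Rightarrow> ('a \<Rightarrow> 'a \<Rightarrow> bool) \<Rightarrow> bool" where
  "transitive_orientation V E T \<longleftrightarrow>
     (\<forall>u v. T u v \<longrightarrow> u \<in> V \<and> v \<in> V) \<and>
     (\<forall>u\<in>V. \<forall>v\<in>V. u \<noteq> v \<longrightarrow> (E u v \<longleftrightarrow> T u v \<or> T v u)) \<and>
     (\<forall>u v. T u v \<longrightarrow> \<not> T v u) \<and>
     (\<forall>u v w. T u v \<longrightarrow> T v w \<longrightarrow> T u w)"

definition comparability_graph :: "'a set \<Rightarrow> ('a \<Rightarrow> 'a \<Rightarrow> bool) \<Rightarrow> bool" where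
  "comparability_graph V E \<longleftrightarrow> (\<exists>T. transitive_orientation V E T)"

definition permutation_graph :: "'a set \<Rightarrow> ('a \<Rightarrow> 'a \<Rightarrow> bool) \<Rightarrow> bool" where
  "permutation_graph V E \<longleftrightarrow>
     graph V E \<and> comparability_graph V E \<and> comparability_graph V (compl_graph V E)"

definition graph_module :: "'a set \<Rightarrow> ('a \<Rightarrow> 'a \<Rightarrow> bool) \<Rightarrow> 'a set \<Rightarrow> bool" where
  "graph_module V E M \<longleftrightarrow> M \<subseteq> V \<and>
     (\<forall>x \<in> V - M. (\<forall>m\<in>M. E x m) \<or> (\<forall>m\<in>M. \<not> E x m))"

definition prime_graph :: "'a set \<Rightarrow> ('a \<Rightarrow> 'a \<Rightarrow> bool) \<Rightarrow> bool" where
  "prime_graph V E \<longleftrightarrow>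
     (\<forall>M. graph_module V E M \<longrightarrow> M = {} \<or> M = V \<or> (\<exists>v. M = {v}))"

definition graph_auts :: "'a set \<Rightarrow> ('a \<Rightarrow> 'a \<Rightarrow> bool) \<Rightarrow> ('a \<Rightarrow> 'a) set" where
  "graph_auts V E = {f \<in> Bij V. \<forall>u\<in>V. \<forall>v\<in>V. E u v \<longleftrightarrow> E (f u) (f v)}"

definition Aut_graph :: "'a set \<Rightarrow> ('a \<Rightarrow> 'a \<Rightarrow> bool) \<Rightarrow> ('a \<Rightarrow> 'a) monoid" where
  "Aut_graph V E = (BijGroup V)\<lparr>carrier := graph_auts V E\<rparr>"

definition Z2_squared :: "(int \<times> int) monoid" where
  "Z2_squared = integer_mod_group 2 \<times>\<times> integer_mod_group 2"

end

theory Submission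
  imports Defs
begin

definition Gam :: "'a set \<Rightarrow> ('a \<Rightarrow> 'a \<Rightarrow> bool) \<Rightarrow> 'a \<times> 'a \<Rightarrow> 'a \<times> 'a \<Rightarrow> bool" where
  "Gam V E p q \<longleftrightarrow> fst p \<in> V \<and> snd p \<in> V \<and> fst q \<in> V \<and> snd q \<in> V \<and>
     E (fst p) (snd p) \<and> E (fst q) (snd q) \<and>
     ((fst p = fst q \<and> snd p \<noteq> snd q \<and> \<not> E (snd p) (snd q)) \<or>
      (snd p = snd q \<and> fst p \<noteq> fst q \<and> \<not> E (fst p) (fst q)))"

abbreviation GG where "GG V E \<equiv> (Gam V E)\<^sup>*\<^sup>*"

lemma Gam_sym: "graph V E \<Longrightarrow> Gam V E p q \<Longrightarrow> Gam V E q p"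
  unfolding Gam_def graph_def by metis

lemma Gam_rev: "Gam V E (a,b) (c,d) \<Longrightarrow> graph V E \<Longrightarrow> Gam V E (b,a) (d,c)"
  unfolding Gam_def graph_def by auto

lemma GG_sym: assumes "graph V E" "GG V E p q" shows "GG V E q p"
  using assms(2)
proof (induction rule: rtranclp_induct)
  case base then show ?case by simp
next
  case (step y z)
  then show ?case using Gam_sym[OF assms(1) step(2)]
    by (meson converse_rtranclp_into_rtranclp)
qed

lemma GG_rev: assumes "graph V E" "GG V E p q" shows "GG V E (snd p, fst p) (snd q, fst q)"
  using assms(2)
proof (induction rule: rtranclp_induct)
  case base then show ?case by simp
next
  case (step y z)
  have "Gam V E (snd y, fst y) (snd z, fst z)"
    using Gam_rev[of V E "fst y" "snd y" "fst z" "snd z"] step(2) assms(1) by simp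
  then show ?case using step(3) by (meson rtranclp.rtrancl_into_rtrancl)
qed

lemma GG_rev': "graph V E \<Longrightarrow> GG V E (a,b) (c,d) \<Longrightarrow> GG V E (b,a) (d,c)"
  using GG_rev[of V E "(a,b)" "(c,d)"] by simp

lemma GG_edge: assumes "GG V E p q" "fst p \<in> V" "snd p \<in> V" "E (fst p) (snd p)"
  shows "fst q \<in> V \<and> snd q \<in> V \<and> E (fst q) (snd q)"
  using assms by (induction rule: rtranclp_induct) (auto simp: Gam_def)

lemma TO_edge: "transitive_orientation V E T \<Longrightarrow> T x y \<Longrightarrow> x \<in> V \<and> y \<in> V \<and> x \<noteq> y \<and> E x y"
  unfolding transitive_orientation_def by metis

lemma Gam_T: assumes "graph V E" "transitive_orientation V E T" "Gam V E p q" "T (fst p) (snd p)"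
  shows "T (fst q) (snd q)"
proof -
  obtain a b c d where p: "p = (a,b)" and q: "q = (c,d)" by force
  have g: "Gam V E (a,b) (c,d)" using assms(3) p q by simp
  have Ta: "T a b" using assms(4) p by simp
  have TO: "(\<forall>u v. T u v \<longrightarrow> u \<in> V \<and> v \<in> V) \<and>
     (\<forall>u\<in>V. \<forall>v\<in>V. u \<noteq> v \<longrightarrow> (E u v \<longleftrightarrow> T u v \<or> T v u)) \<and>
     (\<forall>u v. T u v \<longrightarrow> \<not> T v u) \<and>
     (\<forall>u v w. T u v \<longrightarrow> T v w \<longrightarrow> T u w)" using assms(2) unfolding transitive_orientation_def by blast
  have gr: "\<forall>u\<in>V. \<forall>v\<in>V. E u v \<longrightarrow> E v u" "\<forall>v\<in>V. \<not> E v v" using assms(1) unfolding graph_def by auto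
  from g have cd: "c \<in> V" "d \<in> V" "E c d" "c \<noteq> d" unfolding Gam_def using gr by auto
  from g consider "a = c" "b \<noteq> d" "\<not> E b d" "b \<in> V" "d \<in> V" | "b = d" "a \<noteq> c" "\<not> E a c" "a \<in> V" "c \<in> V"
    unfolding Gam_def by auto
  then show ?thesis
  proof cases
    case 1
    have "T c d \<or> T d c" using TO cd by blast
    moreover have "\<not> T d c"
    proof
      assume "T d c"
      then have "T d b" using TO Ta 1 by blast
      then have "E d b" using TO_edge[OF assms(2)] by blast
      then show False using 1 gr by blast
    qed
    ultimately show ?thesis using q by simp
  next
    case 2
    have "T c d \<or> T d c" using TO cd by blast
    moreover have "\<not> T d c"
    proof
      assume "T d c"
      then have "T a c" using TO Ta 2 by blast
      then have "E a c" using TO_edge[OF assms(2)] by blast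
      then show False using 2 by blast
    qed
    ultimately show ?thesis using q by simp
  qed
qed

lemma GG_T: assumes "graph V E" "transitive_orientation V E T" "GG V E p q" "T (fst p) (snd p)"
  shows "T (fst q) (snd q)"
  using assms(3,4) by (induction rule: rtranclp_induct) (auto intro: Gam_T[OF assms(1,2)])

lemma spanning:
  assumes gr: "graph V E" and pr: "prime_graph V E" and ab: "a \<in> V" "b \<in> V" "E a b"
  shows "\<forall>z\<in>V. \<exists>w. GG V E (a,b) (z,w) \<or> GG V E (a,b) (w,z)"
proof -
  define M where "M = {z \<in> V. \<exists>w. GG V E (a,b) (z,w) \<or> GG V E (a,b) (w,z)}"
  have grs: "\<forall>u\<in>V. \<forall>v\<in>V. E u v \<longrightarrow> E v u" "\<forall>v\<in>V. \<not> E v v" using gr unfolding graph_def by auto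
  have ed: "fst q \<in> V \<and> snd q \<in> V \<and> E (fst q) (snd q)" if "GG V E (a,b) q" for q
    using GG_edge[OF that] ab by simp
  have inM: "fst q \<in> M \<and> snd q \<in> M" if "GG V E (a,b) q" for q
  proof -
    have q': "GG V E (a,b) (fst q, snd q)" using that by simp
    show ?thesis using ed[OF that] q' unfolding M_def by blast
  qed
  have loc: "E x (fst q) \<longleftrightarrow> E x (snd q)" if x: "x \<in> V - M" and q: "GG V E (a,b) q" for x q
  proof
    assume h: "E x (fst q)"
    show "E x (snd q)"
    proof (rule ccontr)
      assume n: "\<not> E x (snd q)"
      have "x \<noteq> snd q" "x \<noteq> fst q" using x inM[OF q] by auto
      moreover have "E (fst q) x" using h x ed[OF q] grs(1) by blast
      moreover have "\<not> E (snd q) x" using n x ed[OF q] grs(1) by blast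
      ultimately have "Gam V E q (fst q, x)" using ed[OF q] x unfolding Gam_def by simp
      then have "GG V E (a,b) (fst q, x)" using q by (meson rtranclp.rtrancl_into_rtrancl)
      then have "x \<in> M" using inM[of "(fst q, x)"] by simp
      then show False using x by simp
    qed
  next
    assume h: "E x (snd q)"
    show "E x (fst q)"
    proof (rule ccontr)
      assume n: "\<not> E x (fst q)"
      have "x \<noteq> snd q" "x \<noteq> fst q" using x inM[OF q] by auto
      moreover have "\<not> E (fst q) x" using n x ed[OF q] grs(1) by blast
      ultimately have "Gam V E q (x, snd q)" using ed[OF q] x h unfolding Gam_def by simp
      then have "GG V E (a,b) (x, snd q)" using q by (meson rtranclp.rtrancl_into_rtrancl)
      then have "x \<in> M" using inM[of "(x, snd q)"] by simp
      then show False using x by simp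
    qed
  qed
  have ind: "(E x (fst q) \<longleftrightarrow> E x a) \<and> (E x (snd q) \<longleftrightarrow> E x a)" if x: "x \<in> V - M" and q: "GG V E (a,b) q" for x q
    using q
  proof (induction rule: rtranclp_induct)
    case base
    then show ?case using loc[OF x, of "(a,b)"] by simp
  next
    case (step y z)
    have lz: "E x (fst z) \<longleftrightarrow> E x (snd z)" using loc[OF x] step(1,2) by (meson rtranclp.rtrancl_into_rtrancl)
    from step(2) have "fst y = fst z \<or> snd y = snd z" unfolding Gam_def by auto
    then show ?case using lz step(3) by auto
  qed
  have mod: "graph_module V E M"
    unfolding graph_module_def
  proof (intro conjI ballI)
    show "M \<subseteq> V" unfolding M_def by auto
  next
    fix x assume x: "x \<in> V - M"
    have "E x m \<longleftrightarrow> E x a" if "m \<in> M" for m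
    proof -
      have "\<exists>w. GG V E (a,b) (m,w) \<or> GG V E (a,b) (w,m)" using that unfolding M_def by simp
      then obtain w where "GG V E (a,b) (m,w) \<or> GG V E (a,b) (w,m)" by (elim exE)
      then show ?thesis
      proof
        assume "GG V E (a,b) (m,w)" then have "(E x m \<longleftrightarrow> E x a) \<and> (E x w \<longleftrightarrow> E x a)" using ind[OF x, of "(m,w)"] by (simp only: fst_conv snd_conv)
        then show ?thesis by blast
      next
        assume "GG V E (a,b) (w,m)" then have "(E x w \<longleftrightarrow> E x a) \<and> (E x m \<longleftrightarrow> E x a)" using ind[OF x, of "(w,m)"] by (simp only: fst_conv snd_conv)
        then show ?thesis by blast
      qed
    qed
    then show "(\<forall>m\<in>M. E x m) \<or> (\<forall>m\<in>M. \<not> E x m)" by blast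
  qed
  have r: "GG V E (a,b) (a,b)" by (rule rtranclp.rtrancl_refl)
  have aM: "a \<in> M" "b \<in> M" using inM[OF r] by simp_all
  have ab': "a \<noteq> b" using ab grs(2) by metis
  have "M = {} \<or> M = V \<or> (\<exists>v. M = {v})" using pr mod unfolding prime_graph_def by blast
  moreover have "M \<noteq> {}" using aM by blast
  moreover have "\<not> (\<exists>v. M = {v})" using aM ab' by auto
  ultimately have MV: "M = V" by blast
  show ?thesis
  proof
    fix z assume "z \<in> V"
    then have "z \<in> M" using MV by simp
    then show "\<exists>w. GG V E (a,b) (z,w) \<or> GG V E (a,b) (w,z)" unfolding M_def by simp
  qed
qed

lemma tri_aux:
  assumes gr: "graph V E" and V: "a \<in> V" "b \<in> V" "c \<in> V"
    and e: "E a b" "E a c" "E b c"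
    and n1: "\<not> GG V E (b,c) (b,a)" and n2: "\<not> GG V E (b,c) (a,c)"
    and q: "GG V E (b,c) q"
  shows "E a (fst q) \<and> GG V E (a,b) (a, fst q) \<and> E a (snd q) \<and> GG V E (a,c) (a, snd q)"
  using q
proof (induction rule: rtranclp_induct)
  case base
  then show ?case using e by simp
next
  case (step y z)
  have grs: "\<forall>u\<in>V. \<forall>v\<in>V. E u v \<longrightarrow> E v u" "\<forall>v\<in>V. \<not> E v v" using gr unfolding graph_def by auto
  obtain \<beta> \<gamma> \<beta>' \<gamma>' where y: "y = (\<beta>,\<gamma>)" and z: "z = (\<beta>',\<gamma>')" by force
  have g: "Gam V E (\<beta>,\<gamma>) (\<beta>',\<gamma>')" using step(2) y z by simp
  have yz: "GG V E (b,c) (\<beta>',\<gamma>')" using step(1,2) z by (meson rtranclp.rtrancl_into_rtrancl)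
  have IH: "E a \<beta>" "GG V E (a,b) (a,\<beta>)" "E a \<gamma>" "GG V E (a,c) (a,\<gamma>)" using step(3) y by auto
  have inV: "\<beta> \<in> V" "\<gamma> \<in> V" "\<beta>' \<in> V" "\<gamma>' \<in> V" "E \<beta>' \<gamma>'" using g unfolding Gam_def by auto
  from g consider "\<beta> = \<beta>'" "\<gamma> \<noteq> \<gamma>'" "\<not> E \<gamma> \<gamma>'" | "\<gamma> = \<gamma>'" "\<beta> \<noteq> \<beta>'" "\<not> E \<beta> \<beta>'"
    unfolding Gam_def by auto
  then show ?case
  proof cases
    case 1
    have bb: "GG V E (\<beta>,a) (b,a)"
      using GG_sym[OF gr GG_rev'[OF gr IH(2)]] .
    have Ea: "E a \<gamma>'"
    proof (rule ccontr)
      assume ne: "\<not> E a \<gamma>'"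
      have "GG V E (b,c) (\<beta>,a)"
      proof (cases "a = \<gamma>'")
        case True then show ?thesis using yz 1 by simp
      next
        case False
        have "E \<beta> a" using IH(1) grs V inV by blast
        moreover have "\<not> E \<gamma>' a" using ne grs V inV by blast
        ultimately have "Gam V E (\<beta>,\<gamma>') (\<beta>,a)" using inV V False 1 unfolding Gam_def by auto
        then show ?thesis using yz 1 by (meson rtranclp.rtrancl_into_rtrancl)
      qed
      then have "GG V E (b,c) (b,a)" using bb by (meson rtranclp_trans)
      then show False using n1 by simp
    qed
    have "Gam V E (a,\<gamma>) (a,\<gamma>')" using IH Ea 1 inV V unfolding Gam_def by auto
    then have "GG V E (a,c) (a,\<gamma>')" using IH(4) by (meson rtranclp.rtrancl_into_rtrancl)
    then show ?thesis using IH Ea 1 z by simp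
  next
    case 2
    have Ea: "E a \<beta>'"
    proof (rule ccontr)
      assume ne: "\<not> E a \<beta>'"
      have "GG V E (b,c) (a,\<gamma>)"
      proof (cases "a = \<beta>'")
        case True then show ?thesis using yz 2 by simp
      next
        case False
        have "\<not> E \<beta>' a" using ne grs V inV by blast
        then have "Gam V E (\<beta>',\<gamma>) (a,\<gamma>)" using inV V False 2 IH(3) unfolding Gam_def by auto
        then show ?thesis using yz 2 by (meson rtranclp.rtrancl_into_rtrancl)
      qed
      then have "GG V E (b,c) (a,c)" using GG_sym[OF gr IH(4)] by (meson rtranclp_trans)
      then show False using n2 by simp
    qed
    have "Gam V E (a,\<beta>) (a,\<beta>')" using IH Ea 2 inV V unfolding Gam_def by auto
    then have "GG V E (a,b) (a,\<beta>')" using IH(2) by (meson rtranclp.rtrancl_into_rtrancl)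
    then show ?thesis using IH Ea 2 z by simp
  qed
qed

lemma tri:
  assumes gr: "graph V E" and pr: "prime_graph V E" and V: "a \<in> V" "b \<in> V" "c \<in> V"
    and e: "E a b" "E a c" "E b c"
  shows "GG V E (b,c) (b,a) \<or> GG V E (b,c) (a,c)"
proof (rule ccontr)
  assume n: "\<not> ?thesis"
  have grs: "\<forall>v\<in>V. \<not> E v v" using gr unfolding graph_def by auto
  obtain w where "GG V E (b,c) (a,w) \<or> GG V E (b,c) (w,a)" using spanning[OF gr pr V(2,3) e(3)] V by blast
  then show False
  proof
    assume h: "GG V E (b,c) (a,w)"
    show False using tri_aux[OF gr V e _ _ h] n grs V by auto
  next
    assume h: "GG V E (b,c) (w,a)"
    show False using tri_aux[OF gr V e _ _ h] n grs V by auto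
  qed
qed

lemma star_step:
  assumes gr: "graph V E" and pr: "prime_graph V E" and V: "v \<in> V" "a \<in> V" "b \<in> V"
    and e: "E v a" "E v b"
  shows "GG V E (v,a) (v,b) \<or> GG V E (v,a) (b,v)"
proof (rule ccontr)
  assume n: "\<not> ?thesis"
  have grs: "\<forall>u\<in>V. \<forall>v\<in>V. E u v \<longrightarrow> E v u" "\<forall>v\<in>V. \<not> E v v" using gr unfolding graph_def by auto
  have ab: "a \<noteq> b" using n by auto
  have Eab: "E a b"
  proof (rule ccontr)
    assume "\<not> E a b"
    then have "Gam V E (v,a) (v,b)" using ab V e unfolding Gam_def by auto
    then show False using n by auto
  qed
  have e': "E a v" "E b v" "E b a" using e Eab grs V by blast+
  have "GG V E (v,b) (v,a) \<or> GG V E (v,b) (a,b)" using tri[OF gr pr V(2,1,3) e'(1) Eab e(2)] .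
  then have h1: "GG V E (v,b) (a,b)" using n GG_sym[OF gr] by blast
  have "GG V E (v,a) (v,b) \<or> GG V E (v,a) (b,a)" using tri[OF gr pr V(3,1,2) e'(2,3) e(1)] .
  then have h2: "GG V E (v,a) (b,a)" using n by blast
  have "GG V E (b,a) (b,v)" using GG_sym[OF gr GG_rev'[OF gr h1]] .
  then have "GG V E (v,a) (b,v)" using h2 by (meson rtranclp_trans)
  then show False using n by blast
qed

lemma all_related:
  assumes gr: "graph V E" and pr: "prime_graph V E" and V: "v \<in> V" "a \<in> V" "c \<in> V" "d \<in> V"
    and e: "E v a" "E c d"
  shows "GG V E (v,a) (c,d) \<or> GG V E (v,a) (d,c)"
proof -
  have grs: "\<forall>u\<in>V. \<forall>v\<in>V. E u v \<longrightarrow> E v u" using gr unfolding graph_def by auto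
  obtain b where b: "GG V E (c,d) (v,b) \<or> GG V E (c,d) (b,v)" using spanning[OF gr pr V(3,4) e(2)] V by blast
  then have b': "GG V E (v,b) (c,d) \<or> GG V E (v,b) (d,c)"
    using GG_sym[OF gr] GG_rev'[OF gr] by blast
  have bV: "b \<in> V" "E v b"
    using b GG_edge[of V E "(c,d)" "(v,b)"] GG_edge[of V E "(c,d)" "(b,v)"] V e grs by auto
  have "GG V E (v,a) (v,b) \<or> GG V E (v,a) (b,v)" using star_step[OF gr pr V(1,2) bV(1) e(1) bV(2)] .
  then show ?thesis
  proof
    assume h: "GG V E (v,a) (v,b)"
    then show ?thesis using b' by (meson rtranclp_trans)
  next
    assume h: "GG V E (v,a) (b,v)"
    have "GG V E (b,v) (d,c) \<or> GG V E (b,v) (c,d)" using b' GG_rev'[OF gr] by blast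
    then show ?thesis using h by (meson rtranclp_trans)
  qed
qed

lemma T_class:
  assumes gr: "graph V E" and pr: "prime_graph V E" and TO: "transitive_orientation V E T" and T0: "T u0 v0"
  shows "T x y \<longleftrightarrow> GG V E (u0,v0) (x,y)"
proof
  have e0: "u0 \<in> V" "v0 \<in> V" "E u0 v0" using TO_edge[OF TO T0] by auto
  have asym: "\<And>u v. T u v \<Longrightarrow> \<not> T v u" using TO unfolding transitive_orientation_def by blast
  assume "T x y"
  then have exy: "x \<in> V" "y \<in> V" "E x y" using TO_edge[OF TO] by auto
  have "GG V E (u0,v0) (x,y) \<or> GG V E (u0,v0) (y,x)" using all_related[OF gr pr e0(1,2) exy(1,2) e0(3) exy(3)] .
  moreover have "\<not> GG V E (u0,v0) (y,x)"
  proof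
    assume "GG V E (u0,v0) (y,x)"
    then have "T y x" using GG_T[OF gr TO, of "(u0,v0)" "(y,x)"] T0 by simp
    then show False using asym \<open>T x y\<close> by blast
  qed
  ultimately show "GG V E (u0,v0) (x,y)" by blast
next
  assume "GG V E (u0,v0) (x,y)"
  then show "T x y" using GG_T[OF gr TO, of "(u0,v0)" "(x,y)"] T0 by simp
qed

lemma unique_TO:
  assumes gr: "graph V E" and pr: "prime_graph V E" and T: "transitive_orientation V E T"
    and S: "transitive_orientation V E S"
  shows "S = T \<or> S = (\<lambda>u v. T v u)"
proof (cases "\<exists>u v. T u v")
  case False
  have "S x y = T x y" for x y
  proof -
    have "\<not> S x y"
    proof
      assume "S x y"
      then have "x \<in> V" "y \<in> V" "x \<noteq> y" "E x y" using TO_edge[OF S] by auto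
      then have "T x y \<or> T y x" using T unfolding transitive_orientation_def by blast
      then show False using False by blast
    qed
    then show ?thesis using False by blast
  qed
  then show ?thesis by blast
next
  case True
  then obtain u0 v0 where T0: "T u0 v0" by blast
  have e0: "u0 \<in> V" "v0 \<in> V" "E u0 v0" "u0 \<noteq> v0" using TO_edge[OF T T0] by auto
  then have "S u0 v0 \<or> S v0 u0" using S unfolding transitive_orientation_def by blast
  then show ?thesis
  proof
    assume S0: "S u0 v0"
    have "S x y = T x y" for x y using T_class[OF gr pr S S0] T_class[OF gr pr T T0] by blast
    then show ?thesis by blast
  next
    assume S0: "S v0 u0"
    have "S x y = T y x" for x y
      using T_class[OF gr pr S S0, of x y] T_class[OF gr pr T T0, of y x] GG_rev'[OF gr] by blast
    then show ?thesis by blast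
  qed
qed


definition pull :: "'a set \<Rightarrow> ('a \<Rightarrow> 'a) \<Rightarrow> ('a \<Rightarrow> 'a \<Rightarrow> bool) \<Rightarrow> ('a \<Rightarrow> 'a \<Rightarrow> bool)" where
  "pull V f T = (\<lambda>u v. u \<in> V \<and> v \<in> V \<and> T (f u) (f v))"

definition rv :: "('a \<Rightarrow> 'a \<Rightarrow> bool) \<Rightarrow> ('a \<Rightarrow> 'a \<Rightarrow> bool)" where
  "rv T = (\<lambda>u v. T v u)"

lemma rv_rv[simp]: "rv (rv T) = T" unfolding rv_def by simp

lemma Bij_mem: "f \<in> Bij V \<Longrightarrow> x \<in> V \<Longrightarrow> f x \<in> V"
  using Bij_imp_funcset by fastforce

lemma Bij_inj: "f \<in> Bij V \<Longrightarrow> inj_on f V"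
  unfolding Bij_def bij_betw_def by simp

lemma Bij_img: "f \<in> Bij V \<Longrightarrow> f ` V = V"
  unfolding Bij_def bij_betw_def by simp

lemma pull_TO:
  assumes TO: "transitive_orientation V E T" and f: "f \<in> Bij V"
    and pres: "\<forall>u\<in>V. \<forall>v\<in>V. E u v \<longleftrightarrow> E (f u) (f v)"
  shows "transitive_orientation V E (pull V f T)"
proof -
  have T: "(\<forall>u v. T u v \<longrightarrow> u \<in> V \<and> v \<in> V) \<and>
     (\<forall>u\<in>V. \<forall>v\<in>V. u \<noteq> v \<longrightarrow> (E u v \<longleftrightarrow> T u v \<or> T v u)) \<and>
     (\<forall>u v. T u v \<longrightarrow> \<not> T v u) \<and>
     (\<forall>u v w. T u v \<longrightarrow> T v w \<longrightarrow> T u w)" using TO unfolding transitive_orientation_def by blast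
  have inj: "inj_on f V" using Bij_inj[OF f] .
  have m: "\<And>x. x \<in> V \<Longrightarrow> f x \<in> V" using Bij_mem[OF f] .
  show ?thesis unfolding transitive_orientation_def pull_def
  proof (intro conjI allI ballI impI)
    fix u v assume uv: "u \<in> V" "v \<in> V" "u \<noteq> v"
    then have "f u \<noteq> f v" using inj unfolding inj_on_def by blast
    then show "E u v \<longleftrightarrow> (u \<in> V \<and> v \<in> V \<and> T (f u) (f v)) \<or> (v \<in> V \<and> u \<in> V \<and> T (f v) (f u))"
      using T pres uv m by blast
  qed (use T in blast)+
qed

lemma pull_comp: "f \<in> Bij V \<Longrightarrow> g \<in> Bij V \<Longrightarrow> pull V (compose V f g) T = pull V g (pull V f T)"
  unfolding pull_def compose_def using Bij_mem[of g V] by (intro ext) auto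

lemma pull_rv: "pull V g (rv T) = rv (pull V g T)"
  unfolding pull_def rv_def by (intro ext) auto

definition sg :: "'a set \<Rightarrow> ('a \<Rightarrow> 'a \<Rightarrow> bool) \<Rightarrow> ('a \<Rightarrow> 'a) \<Rightarrow> int" where
  "sg V T f = (if pull V f T = T then 0 else 1)"

lemma sg_mult:
  assumes f: "f \<in> Bij V" and g: "g \<in> Bij V"
    and pf: "pull V f T = T \<or> pull V f T = rv T" and pg: "pull V g T = T \<or> pull V g T = rv T"
  shows "sg V T (compose V f g) = (sg V T f + sg V T g) mod 2"
proof -
  have c: "pull V (compose V f g) T = pull V g (pull V f T)" using pull_comp[OF f g] .
  show ?thesis
  proof (cases "pull V f T = T")
    case True
    then show ?thesis using c pg unfolding sg_def by auto
  next
    case False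
    then have pf': "pull V f T = rv T" "rv T \<noteq> T" using pf by auto
    then have c': "pull V (compose V f g) T = rv (pull V g T)" using c pull_rv by metis
    show ?thesis
    proof (cases "pull V g T = T")
      case True
      then show ?thesis using c' pf' False unfolding sg_def by auto
    next
      case False2: False
      then have "pull V g T = rv T" using pg by auto
      then show ?thesis using c' False False2 unfolding sg_def by auto
    qed
  qed
qed

lemma TO_tot: "transitive_orientation V E T \<Longrightarrow> u \<in> V \<Longrightarrow> v \<in> V \<Longrightarrow> u \<noteq> v \<Longrightarrow> E u v \<Longrightarrow> T u v \<or> T v u"
  unfolding transitive_orientation_def by blast
lemma TO_trans: "transitive_orientation V E T \<Longrightarrow> T u v \<Longrightarrow> T v w \<Longrightarrow> T u w"
  unfolding transitive_orientation_def by blast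
lemma TO_asym: "transitive_orientation V E T \<Longrightarrow> T u v \<Longrightarrow> \<not> T v u"
  unfolding transitive_orientation_def by blast

lemma fix_id:
  assumes gr: "graph V E" and T: "transitive_orientation V E T"
    and T': "transitive_orientation V (compl_graph V E) T'"
    and f: "f \<in> Bij V" and pT: "pull V f T = T" and pT': "pull V f T' = T'"
  shows "f = (\<lambda>x\<in>V. x)"
proof -
  have fin: "finite V" using gr unfolding graph_def by simp
  have grs: "\<And>u v. u \<in> V \<Longrightarrow> v \<in> V \<Longrightarrow> E u v \<Longrightarrow> E v u" using gr unfolding graph_def by blast
  have Te: "\<And>x y. T x y \<Longrightarrow> x \<in> V \<and> y \<in> V \<and> E x y" using TO_edge[OF T] by blast
  have Te': "\<And>x y. T' x y \<Longrightarrow> x \<in> V \<and> y \<in> V \<and> \<not> E x y \<and> x \<noteq> y"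
  proof -
    fix x y assume "T' x y"
    then have "x \<in> V \<and> y \<in> V \<and> x \<noteq> y \<and> compl_graph V E x y" using TO_edge[OF T'] by blast
    then show "x \<in> V \<and> y \<in> V \<and> \<not> E x y \<and> x \<noteq> y" unfolding compl_graph_def by blast
  qed
  have Ttot': "\<And>x y. x \<in> V \<Longrightarrow> y \<in> V \<Longrightarrow> x \<noteq> y \<Longrightarrow> \<not> E x y \<Longrightarrow> T' x y \<or> T' y x"
    using TO_tot[OF T'] unfolding compl_graph_def by blast
  have Ttot: "\<And>x y. x \<in> V \<Longrightarrow> y \<in> V \<Longrightarrow> x \<noteq> y \<Longrightarrow> E x y \<Longrightarrow> T x y \<or> T y x"
    using TO_tot[OF T] by blast
  have Ttr: "\<And>x y z. T x y \<Longrightarrow> T y z \<Longrightarrow> T x z" using TO_trans[OF T] by blast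
  have Ttr': "\<And>x y z. T' x y \<Longrightarrow> T' y z \<Longrightarrow> T' x z" using TO_trans[OF T'] by blast
  have Tas: "\<And>x. \<not> T x x" using TO_asym[OF T] by blast
  have Tas': "\<And>x. \<not> T' x x" using TO_asym[OF T'] by blast
  define L where "L = (\<lambda>x y. T x y \<or> T' x y)"
  have LV: "L x y \<Longrightarrow> x \<in> V \<and> y \<in> V" for x y using Te Te' unfolding L_def by blast
  have Lirr: "\<not> L x x" for x using Tas Tas' unfolding L_def by blast
  have Ltot: "x \<in> V \<Longrightarrow> y \<in> V \<Longrightarrow> x \<noteq> y \<Longrightarrow> L x y \<or> L y x" for x y
    using Ttot Ttot' unfolding L_def by blast
  have Ltr: "L x z" if xy: "L x y" and yz: "L y z" for x y z
  proof -
    have V: "x \<in> V" "y \<in> V" "z \<in> V" using LV xy yz by blast+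
    consider "T x y" "T y z" | "T' x y" "T' y z" | "T x y" "T' y z" | "T' x y" "T y z"
      using xy yz unfolding L_def by blast
    then show ?thesis
    proof cases
      case 1 then show ?thesis using Ttr unfolding L_def by blast
    next
      case 2 then show ?thesis using Ttr' unfolding L_def by blast
    next
      case 3
      have Exy: "E x y" "\<not> E y z" using 3 Te Te' by blast+
      have "x \<noteq> z" using Exy grs V by blast
      show ?thesis
      proof (cases "E x z")
        case True
        then have "T x z \<or> T z x" using Ttot V \<open>x \<noteq> z\<close> by blast
        moreover have "\<not> T z x"
        proof
          assume "T z x" then have "T z y" using 3 Ttr by blast
          then have "E z y" using Te by blast
          then show False using Exy grs V by blast
        qed
        ultimately show ?thesis unfolding L_def by blast
      next
        case False
        then have "T' x z \<or> T' z x" using Ttot' V \<open>x \<noteq> z\<close> by blast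
        moreover have "\<not> T' z x"
        proof
          assume "T' z x" then have "T' y x" using 3 Ttr' by blast
          then have "\<not> E y x" using Te' by blast
          then show False using Exy grs V by blast
        qed
        ultimately show ?thesis unfolding L_def by blast
      qed
    next
      case 4
      have Exy: "\<not> E x y" "E y z" using 4 Te Te' by blast+
      have "x \<noteq> z" using Exy grs V by blast
      show ?thesis
      proof (cases "E x z")
        case True
        then have "T x z \<or> T z x" using Ttot V \<open>x \<noteq> z\<close> by blast
        moreover have "\<not> T z x"
        proof
          assume "T z x" then have "T y x" using 4 Ttr by blast
          then have "E y x" using Te by blast
          then show False using Exy grs V by blast
        qed
        ultimately show ?thesis unfolding L_def by blast
      next
        case False
        then have "T' x z \<or> T' z x" using Ttot' V \<open>x \<noteq> z\<close> by blast
        moreover have "\<not> T' z x"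
        proof
          assume "T' z x" then have "T' z y" using 4 Ttr' by blast
          then have "\<not> E z y" using Te' by blast
          then show False using Exy grs V by blast
        qed
        ultimately show ?thesis unfolding L_def by blast
      qed
    qed
  qed
  have pres: "L (f x) (f y) \<longleftrightarrow> L x y" if "x \<in> V" "y \<in> V" for x y
  proof -
    have "T x y = pull V f T x y" "T' x y = pull V f T' x y" using pT pT' by auto
    then show ?thesis using that unfolding L_def pull_def by blast
  qed
  define pred where "pred x = {y \<in> V. L y x}" for x
  have inj: "inj_on f V" using Bij_inj[OF f] .
  have img: "f ` V = V" using Bij_img[OF f] .
  have predimg: "pred (f x) = f ` pred x" if x: "x \<in> V" for x
  proof
    show "f ` pred x \<subseteq> pred (f x)" using pres x img unfolding pred_def by auto
  next
    show "pred (f x) \<subseteq> f ` pred x"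
    proof
      fix z assume "z \<in> pred (f x)"
      then have z: "z \<in> V" "L z (f x)" unfolding pred_def by auto
      then obtain y where y: "y \<in> V" "z = f y" using img by blast
      then have "L y x" using pres x z by blast
      then show "z \<in> f ` pred x" using y unfolding pred_def by blast
    qed
  qed
  have cardeq: "card (pred (f x)) = card (pred x)" if x: "x \<in> V" for x
  proof -
    have "pred x \<subseteq> V" unfolding pred_def by auto
    then have "inj_on f (pred x)" using inj inj_on_subset by blast
    then show ?thesis using predimg[OF x] card_image by metis
  qed
  have less: "card (pred x) < card (pred y)" if "L x y" for x y
  proof (rule psubset_card_mono)
    show "finite (pred y)" using fin unfolding pred_def by auto
    show "pred x \<subset> pred y"
    proof
      show "pred x \<subseteq> pred y" using Ltr that unfolding pred_def by blast
      have "x \<in> pred y" "x \<notin> pred x" using that LV Lirr unfolding pred_def by auto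
      then show "pred x \<noteq> pred y" by blast
    qed
  qed
  have fx: "f x = x" if x: "x \<in> V" for x
  proof (rule ccontr)
    assume "f x \<noteq> x"
    moreover have "f x \<in> V" using img x by blast
    ultimately have "L x (f x) \<or> L (f x) x" using Ltot x by blast
    then show False using less cardeq[OF x] by force
  qed
  show ?thesis
  proof
    fix x show "f x = (\<lambda>x\<in>V. x) x"
    proof (cases "x \<in> V")
      case True then show ?thesis using fx by simp
    next
      case False
      have "f \<in> extensional V" using f Bij_imp_extensional by blast
      then show ?thesis using False by (simp add: extensional_def)
    qed
  qed
qed


lemma aut_iff: "f \<in> graph_auts V E \<longleftrightarrow> f \<in> Bij V \<and> (\<forall>u\<in>V. \<forall>v\<in>V. E u v \<longleftrightarrow> E (f u) (f v))"
  unfolding graph_auts_def by simp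

lemma mult_Bij: "f \<in> Bij V \<Longrightarrow> g \<in> Bij V \<Longrightarrow> f \<otimes>\<^bsub>BijGroup V\<^esub> g = compose V f g"
  by (simp add: BijGroup_def)

lemma auts_subgroup: "subgroup (graph_auts V E) (BijGroup V)"
proof (rule subgroup.intro)
  show "graph_auts V E \<subseteq> carrier (BijGroup V)" by (auto simp: graph_auts_def BijGroup_def)
next
  fix f g assume f: "f \<in> graph_auts V E" and g: "g \<in> graph_auts V E"
  have fB: "f \<in> Bij V" and gB: "g \<in> Bij V" using f g unfolding aut_iff by blast+
  have "compose V f g \<in> graph_auts V E"
    unfolding aut_iff
  proof
    show "compose V f g \<in> Bij V" using compose_Bij[OF fB gB] .
    show "\<forall>u\<in>V. \<forall>v\<in>V. E u v = E (compose V f g u) (compose V f g v)"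
    proof (intro ballI)
      fix u v assume uv: "u \<in> V" "v \<in> V"
      have gu: "g u \<in> V" "g v \<in> V" using uv Bij_mem[OF gB] by auto
      have "E u v = E (g u) (g v)" using g uv unfolding aut_iff by blast
      also have "\<dots> = E (f (g u)) (f (g v))" using f gu unfolding aut_iff by blast
      finally show "E u v = E (compose V f g u) (compose V f g v)" using uv by (simp add: compose_def)
    qed
  qed
  then show "f \<otimes>\<^bsub>BijGroup V\<^esub> g \<in> graph_auts V E" using mult_Bij[OF fB gB] by simp
next
  show "\<one>\<^bsub>BijGroup V\<^esub> \<in> graph_auts V E"
    by (simp add: BijGroup_def aut_iff id_Bij)
next
  fix f assume f: "f \<in> graph_auts V E"
  have fB: "f \<in> Bij V" using f unfolding aut_iff by blast
  have inv: "inv\<^bsub>BijGroup V\<^esub> f = (\<lambda>x\<in>V. inv_into V f x)" using inv_BijGroup[OF fB] .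
  have img: "f ` V = V" using Bij_img[OF fB] .
  have "(\<lambda>x\<in>V. inv_into V f x) \<in> graph_auts V E"
    unfolding aut_iff
  proof
    show "(\<lambda>x\<in>V. inv_into V f x) \<in> Bij V" using restrict_inv_into_Bij[OF fB] .
    show "\<forall>u\<in>V. \<forall>v\<in>V. E u v = E ((\<lambda>x\<in>V. inv_into V f x) u) ((\<lambda>x\<in>V. inv_into V f x) v)"
    proof (intro ballI)
      fix u v assume uv: "u \<in> V" "v \<in> V"
      have iu: "inv_into V f u \<in> V" "f (inv_into V f u) = u" using uv img Bij_inv_into_mem[OF fB] f_inv_into_f[of u f V] by auto
      have iv: "inv_into V f v \<in> V" "f (inv_into V f v) = v" using uv img Bij_inv_into_mem[OF fB] f_inv_into_f[of v f V] by auto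
      have "E (inv_into V f u) (inv_into V f v) = E u v" using f iu iv unfolding aut_iff by metis
      then show "E u v = E ((\<lambda>x\<in>V. inv_into V f x) u) ((\<lambda>x\<in>V. inv_into V f x) v)" using uv by simp
    qed
  qed
  then show "inv\<^bsub>BijGroup V\<^esub> f \<in> graph_auts V E" using inv by simp
qed

lemma graph_compl: "graph V E \<Longrightarrow> graph V (compl_graph V E)"
  unfolding graph_def compl_graph_def by blast

lemma module_compl: "graph_module V (compl_graph V E) M = graph_module V E M"
  unfolding graph_module_def compl_graph_def by auto

lemma prime_compl: "prime_graph V E \<Longrightarrow> prime_graph V (compl_graph V E)"
  unfolding prime_graph_def module_compl by blast

lemma aut_compl: assumes "f \<in> graph_auts V E"
  shows "\<forall>u\<in>V. \<forall>v\<in>V. compl_graph V E u v \<longleftrightarrow> compl_graph V E (f u) (f v)"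
proof -
  have fB: "f \<in> Bij V" and p: "\<forall>u\<in>V. \<forall>v\<in>V. E u v \<longleftrightarrow> E (f u) (f v)" using assms unfolding aut_iff by blast+
  have inj: "inj_on f V" using Bij_inj[OF fB] .
  show ?thesis
  proof (intro ballI)
    fix u v assume uv: "u \<in> V" "v \<in> V"
    have "(f u = f v) = (u = v)" using inj_on_eq_iff[OF inj uv] .
    moreover have "E u v = E (f u) (f v)" using p uv by blast
    ultimately show "compl_graph V E u v = compl_graph V E (f u) (f v)" unfolding compl_graph_def by simp
  qed
qed

lemma Z2_carrier: "carrier Z2_squared = {0..<2} \<times> {0..<2}"
  by (simp add: Z2_squared_def carrier_integer_mod_group)

lemma Z2_mult: "(x1,y1) \<otimes>\<^bsub>Z2_squared\<^esub> (x2,y2) = ((x1 + x2) mod (2::int), (y1 + y2) mod (2::int))"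
  by (simp add: Z2_squared_def)

lemma Z2_one: "\<one>\<^bsub>Z2_squared\<^esub> = (0,0)"
  by (simp add: Z2_squared_def)

lemma Z2_group: "group Z2_squared"
  unfolding Z2_squared_def by (intro DirProd_group group_integer_mod_group)

theorem mainTheorem6:
  fixes V :: "'a set" and E :: "'a \<Rightarrow> 'a \<Rightarrow> bool"
  assumes "permutation_graph V E" and "prime_graph V E"
  shows "\<exists>H. subgroup H Z2_squared \<and> Aut_graph V E \<cong> Z2_squared\<lparr>carrier := H\<rparr>"
proof -
  have gr: "graph V E" using assms(1) unfolding permutation_graph_def by blast
  obtain T where T: "transitive_orientation V E T"
    using assms(1) unfolding permutation_graph_def comparability_graph_def by blast
  obtain T' where T': "transitive_orientation V (compl_graph V E) T'"
    using assms(1) unfolding permutation_graph_def comparability_graph_def by blast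
  have pr: "prime_graph V E" by fact
  have grc: "graph V (compl_graph V E)" using graph_compl[OF gr] .
  have prc: "prime_graph V (compl_graph V E)" using prime_compl[OF pr] .
  have pullT: "pull V f T = T \<or> pull V f T = rv T" if f: "f \<in> graph_auts V E" for f
  proof -
    have "f \<in> Bij V" "\<forall>u\<in>V. \<forall>v\<in>V. E u v \<longleftrightarrow> E (f u) (f v)" using f unfolding aut_iff by blast+
    then have "transitive_orientation V E (pull V f T)" using pull_TO[OF T] by blast
    then show ?thesis using unique_TO[OF gr pr T] unfolding rv_def by blast
  qed
  have pullT': "pull V f T' = T' \<or> pull V f T' = rv T'" if f: "f \<in> graph_auts V E" for f
  proof -
    have "f \<in> Bij V" using f unfolding aut_iff by blast
    then have "transitive_orientation V (compl_graph V E) (pull V f T')" using pull_TO[OF T'] aut_compl[OF f] by blast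
    then show ?thesis using unique_TO[OF grc prc T'] unfolding rv_def by blast
  qed
  define G where "G = Aut_graph V E"
  have cG: "carrier G = graph_auts V E" unfolding G_def Aut_graph_def by simp
  have mG: "x \<otimes>\<^bsub>G\<^esub> y = compose V x y" if "x \<in> graph_auts V E" "y \<in> graph_auts V E" for x y
    using that mult_Bij unfolding G_def Aut_graph_def aut_iff by auto
  have oG: "\<one>\<^bsub>G\<^esub> = (\<lambda>x\<in>V. x)" unfolding G_def Aut_graph_def by (simp add: BijGroup_def)
  have grpG: "group G" unfolding G_def Aut_graph_def
    using subgroup.subgroup_is_group[OF auts_subgroup group_BijGroup] .
  define \<phi> where "\<phi> f = (sg V T f, sg V T' f)" for f
  have hom: "\<phi> \<in> hom G Z2_squared"
  proof (rule homI)
    fix x assume "x \<in> carrier G"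
    show "\<phi> x \<in> carrier Z2_squared" unfolding Z2_carrier \<phi>_def sg_def by auto
  next
    fix x y assume x: "x \<in> carrier G" and y: "y \<in> carrier G"
    have xa: "x \<in> graph_auts V E" and ya: "y \<in> graph_auts V E" using x y cG by auto
    have xB: "x \<in> Bij V" and yB: "y \<in> Bij V" using xa ya unfolding aut_iff by blast+
    show "\<phi> (x \<otimes>\<^bsub>G\<^esub> y) = \<phi> x \<otimes>\<^bsub>Z2_squared\<^esub> \<phi> y"
      unfolding mG[OF xa ya] \<phi>_def Z2_mult
      using sg_mult[OF xB yB pullT[OF xa] pullT[OF ya]] sg_mult[OF xB yB pullT'[OF xa] pullT'[OF ya]] by simp
  qed
  have gh: "group_hom G Z2_squared \<phi>"
    unfolding group_hom_def group_hom_axioms_def using grpG Z2_group hom by blast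
  have ker: "kernel G Z2_squared \<phi> = {\<one>\<^bsub>G\<^esub>}"
  proof
    show "kernel G Z2_squared \<phi> \<subseteq> {\<one>\<^bsub>G\<^esub>}"
    proof
      fix f assume "f \<in> kernel G Z2_squared \<phi>"
      then have f: "f \<in> graph_auts V E" "\<phi> f = (0,0)" unfolding kernel_def cG Z2_one by auto
      then have "pull V f T = T" "pull V f T' = T'" unfolding \<phi>_def sg_def by (auto split: if_splits)
      moreover have "f \<in> Bij V" using f unfolding aut_iff by blast
      ultimately have "f = (\<lambda>x\<in>V. x)" using fix_id[OF gr T T'] by blast
      then show "f \<in> {\<one>\<^bsub>G\<^esub>}" using oG by simp
    qed
  next
    show "{\<one>\<^bsub>G\<^esub>} \<subseteq> kernel G Z2_squared \<phi>"
      unfolding kernel_def using group_hom.hom_one[OF gh] monoid.one_closed[OF group.is_monoid[OF grpG]] by auto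
  qed
  have inj: "inj_on \<phi> (carrier G)" using group_hom.trivial_ker_imp_inj[OF gh ker] .
  have sub: "subgroup (\<phi> ` carrier G) Z2_squared" using group_hom.img_is_subgroup[OF gh] .
  have "\<phi> \<in> iso G (Z2_squared\<lparr>carrier := \<phi> ` carrier G\<rparr>)"
    unfolding iso_def
  proof (intro CollectI conjI)
    show "\<phi> \<in> hom G (Z2_squared\<lparr>carrier := \<phi> ` carrier G\<rparr>)"
      using hom unfolding hom_def by auto
    show "bij_betw \<phi> (carrier G) (carrier (Z2_squared\<lparr>carrier := \<phi> ` carrier G\<rparr>))"
      using inj by (simp add: bij_betw_def)
  qed
  then have "G \<cong> Z2_squared\<lparr>carrier := \<phi> ` carrier G\<rparr>" by (rule is_isoI)
  then show ?thesis using sub unfolding G_def by blast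
qed

end
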